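(* Assume (A1), (A2), (A3). The function $f$ is $\mathcal C^2$ on $(0,R_1)$, with right derivative $f'_+(0)=1$ and left derivative $f'_-(R_1)>0$, and $f$ is constant on $[R_1,\infty)$. Moreover $f$ is non-negative, non-decreasing and concave, and for all $s\ge0$, \[\min(s,R_1)\,f'_-(R_1)\le f(s)\le\min(s,f(R_1))\le\min(s,R_1).\]
   Context: $U,W\in\mathcal C^1(\mathbb R^d)$. (A1): $U\ge0$ and there exist $\lambda>0$, $A\ge0$ with $\tfrac12\nabla U(x)\cdot x\ge\lambda(U(x)+|x|^2/4)-A$ for all $x$. (A2): $\nabla U$ is $L_U$-Lipschitz, $L_U>0$. (A3): $W$ even, $\nabla W$ is $L_W$-Lipschitz, $L_W<\lambda/8$. Fix $\tilde A\ge0$ with $U(x)\ge\frac\lambda6|x|^2-\tilde A$ for all $x$. Set $\gamma=\frac{\lambda}{2(\lambda+1)}$, $B=24(A+(\lambda-\gamma)\tilde A+d)$, $\alpha=L_U+\frac\lambda4$, $R_1=\sqrt{\frac{24((1+\alpha)^2+\alpha^2)}{5\gamma\min(3,\lambda/3)}B}$, $\kappa_0=\frac{L_U+L_W}\alpha+\alpha+96\max(\frac1{2\alpha},1)$, \[c=\min\Big\{\frac\gamma{36},\ \frac B3,\ \frac17\min\Big(\frac12-\frac{L_U+L_W}{2\alpha},\,2\sqrt{\tfrac{L_U+L_W}{2\pi\alpha}}\Big)\exp\Big(-\tfrac18\kappa_0R_1^2\Big)\Big\},\] $\epsilon=3c/B$, $\mathbf C=c+2\epsilon B$, and for $s\ge0$: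 $\phi(s)=\exp\big(-\frac18\big(\frac{L_U+L_W}\alpha+\alpha+96\epsilon\max(\frac1{2\alpha},1)\big)s^2\big)$, $\Phi(s)=\int_0^s\phi(u)du$, $g(s)=1-\frac{\mathbf C}4\int_0^s\frac{\Phi(u)}{\phi(u)}du$, $f(s)=\int_0^{\min(s,R_1)}\phi(u)g(u)du$. *)

theory Defs
  imports "HOL-Analysis.Analysis"
begin

definition gam :: "real \<Rightarrow> real" where
  "gam lam = lam / (2 * (lam + 1))"

definition Bc :: "real \<Rightarrow> real \<Rightarrow> real \<Rightarrow> nat \<Rightarrow> real" where
  "Bc lam A At d = 24 * (A + (lam - gam lam) * At + real d)"

definition alph :: "real \<Rightarrow> real \<Rightarrow> real" where
  "alph lam LU = LU + lam / 4"

definition R1 :: "real \<Rightarrow> real \<Rightarrow> real \<Rightarrow> real \<Rightarrow> nat \<Rightarrow> real" where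
  "R1 lam A At LU d =
     sqrt (24 * ((1 + alph lam LU)^2 + (alph lam LU)^2)
           / (5 * gam lam * min 3 (lam / 3)) * Bc lam A At d)"

definition kappa0 :: "real \<Rightarrow> real \<Rightarrow> real \<Rightarrow> real" where
  "kappa0 lam LU LW = (LU + LW) / alph lam LU + alph lam LU
                      + 96 * max (1 / (2 * alph lam LU)) 1"

definition cc :: "real \<Rightarrow> real \<Rightarrow> real \<Rightarrow> real \<Rightarrow> real \<Rightarrow> nat \<Rightarrow> real" where
  "cc lam A At LU LW d = min (gam lam / 36) (min (Bc lam A At d / 3)
     (1/7 * min (1/2 - (LU + LW) / (2 * alph lam LU))
                (2 * sqrt ((LU + LW) / (2 * pi * alph lam LU)))
      * exp (- (1/8) * kappa0 lam LU LW * (R1 lam A At LU d)^2)))"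

definition eps :: "real \<Rightarrow> real \<Rightarrow> real \<Rightarrow> real \<Rightarrow> real \<Rightarrow> nat \<Rightarrow> real" where
  "eps lam A At LU LW d = 3 * cc lam A At LU LW d / Bc lam A At d"

definition CC :: "real \<Rightarrow> real \<Rightarrow> real \<Rightarrow> real \<Rightarrow> real \<Rightarrow> nat \<Rightarrow> real" where
  "CC lam A At LU LW d = cc lam A At LU LW d + 2 * eps lam A At LU LW d * Bc lam A At d"

definition phi :: "real \<Rightarrow> real \<Rightarrow> real \<Rightarrow> real \<Rightarrow> real \<Rightarrow> nat \<Rightarrow> real \<Rightarrow> real" where
  "phi lam A At LU LW d s = exp (- (1/8) * ((LU + LW) / alph lam LU + alph lam LU
      + 96 * eps lam A At LU LW d * max (1 / (2 * alph lam LU)) 1) * s^2)"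

definition Phi :: "real \<Rightarrow> real \<Rightarrow> real \<Rightarrow> real \<Rightarrow> real \<Rightarrow> nat \<Rightarrow> real \<Rightarrow> real" where
  "Phi lam A At LU LW d s = integral {0..s} (phi lam A At LU LW d)"

definition gfun :: "real \<Rightarrow> real \<Rightarrow> real \<Rightarrow> real \<Rightarrow> real \<Rightarrow> nat \<Rightarrow> real \<Rightarrow> real" where
  "gfun lam A At LU LW d s = 1 - CC lam A At LU LW d / 4 *
      integral {0..s} (\<lambda>u. Phi lam A At LU LW d u / phi lam A At LU LW d u)"

definition ffun :: "real \<Rightarrow> real \<Rightarrow> real \<Rightarrow> real \<Rightarrow> real \<Rightarrow> nat \<Rightarrow> real \<Rightarrow> real" where
  "ffun lam A At LU LW d s = integral {0..min s (R1 lam A At LU d)}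
      (\<lambda>u. phi lam A At LU LW d u * gfun lam A At LU LW d u)"

end

theory Submission
  imports Defs
begin

lemma deriv_int:
  fixes h :: "real \<Rightarrow> real"
  assumes "continuous_on {a..b} h" "a < x" "x < b"
  shows "((\<lambda>t. integral {a..t} h) has_real_derivative h x) (at x)"
proof -
  have "((\<lambda>t. integral {a..t} h) has_real_derivative h x) (at x within {a..b})"
    using assms by (intro integral_has_real_derivative) auto
  moreover have "at x within {a..b} = at x"
    using assms by (intro at_within_interior) auto
  ultimately show ?thesis by simp
qed

locale fsetup =
  fixes k C R :: real and ph Ph gg ff :: "real \<Rightarrow> real"
  assumes k_nn: "k \<ge> 0" and C_nn: "C \<ge> 0" and R_pos: "R > 0"
    and ph_def: "\<And>s. ph s = exp (- (1/8) * k * s^2)"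
    and Ph_def: "\<And>s. Ph s = integral {0..s} ph"
    and gg_def: "\<And>s. gg s = 1 - C/4 * integral {0..s} (\<lambda>u. Ph u / ph u)"
    and ff_def: "\<And>s. ff s = integral {0..min s R} (\<lambda>u. ph u * gg u)"
    and small: "C * R^2 < 4 * ph R"
begin

lemma ph_pos: "ph s > 0" by (simp add: ph_def)

lemma ph_le1: "ph s \<le> 1"
  using k_nn by (simp add: ph_def)

lemma ph_0: "ph 0 = 1" by (simp add: ph_def)

lemma ph_cont: "continuous_on S ph"
  unfolding ph_def[abs_def] by (intro continuous_intros)

lemma ph_deriv: "(ph has_real_derivative ph x * (- (1/4) * k * x)) (at x)"
  unfolding ph_def[abs_def]
  by (auto intro!: derivative_eq_intros simp: algebra_simps)

lemma ph_anti: "0 \<le> x \<Longrightarrow> x \<le> y \<Longrightarrow> ph y \<le> ph x"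
  using k_nn unfolding ph_def
  by (simp add: mult_left_mono power_mono)

lemma ph_int: "ph integrable_on {a..b}"
  by (intro integrable_continuous_interval ph_cont)

lemma Ph_cont: "continuous_on {0..b} Ph"
  unfolding Ph_def[abs_def] by (intro indefinite_integral_continuous_1 ph_int)

lemma Ph_deriv: "0 < x \<Longrightarrow> (Ph has_real_derivative ph x) (at x)"
  unfolding Ph_def[abs_def] by (rule deriv_int[where b="x+1"]) (auto intro: ph_cont)

lemma Ph_nn: "0 \<le> s \<Longrightarrow> 0 \<le> Ph s"
  unfolding Ph_def using ph_pos by (intro integral_nonneg ph_int) (auto intro: less_imp_le)

lemma Ph_le: "0 \<le> s \<Longrightarrow> Ph s \<le> s"
proof -
  assume s: "0 \<le> s"
  have "Ph s \<le> integral {0..s} (\<lambda>_. 1::real)"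
    unfolding Ph_def by (intro integral_le ph_int ph_le1) auto
  with s show ?thesis by simp
qed

definition q where "q u = Ph u / ph u"

lemma q_cont: "continuous_on {0..b} q"
  unfolding q_def[abs_def] using ph_pos
  by (intro continuous_intros Ph_cont ph_cont) (use ph_pos in \<open>auto simp: less_imp_le dest: sym\<close>, metis less_irrefl ph_pos)

lemma q_nn: "0 \<le> s \<Longrightarrow> 0 \<le> q s"
  unfolding q_def using Ph_nn ph_pos by (simp add: less_imp_le)

lemma q_int: "q integrable_on {0..b}"
  by (intro integrable_continuous_interval q_cont)

lemma gg_alt: "gg s = 1 - C/4 * integral {0..s} q"
  unfolding gg_def q_def[abs_def] ..

lemma gg_cont: "continuous_on {0..b} gg"
  unfolding gg_alt[abs_def]
  by (intro continuous_intros indefinite_integral_continuous_1 q_int)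

lemma gg_deriv: "0 < x \<Longrightarrow> (gg has_real_derivative - (C/4) * q x) (at x)"
proof -
  assume x: "0 < x"
  have "((\<lambda>t. integral {0..t} q) has_real_derivative q x) (at x)"
    by (rule deriv_int[where b="x+1"]) (use x q_cont in auto)
  then show ?thesis unfolding gg_alt[abs_def]
    by (auto intro!: derivative_eq_intros)
qed

lemma gg_0: "gg 0 = 1" unfolding gg_alt by simp

lemma gg_le1: "0 \<le> s \<Longrightarrow> gg s \<le> 1"
proof -
  assume s: "0 \<le> s"
  have "0 \<le> integral {0..s} q" using q_nn by (intro integral_nonneg q_int) auto
  then show ?thesis unfolding gg_alt using C_nn by simp
qed

lemma gg_anti: "0 \<le> x \<Longrightarrow> x \<le> y \<Longrightarrow> gg y \<le> gg x"
proof -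
  assume xy: "0 \<le> x" "x \<le> y"
  show ?thesis
  proof (rule DERIV_nonpos_imp_decreasing_open[OF xy(2)])
    fix z assume "x < z" "z < y"
    then show "\<exists>c. (gg has_real_derivative c) (at z) \<and> c \<le> 0"
      using xy gg_deriv[of z] q_nn[of z] C_nn by (intro exI[of _ "- (C/4) * q z"]) auto
  next
    show "continuous_on {x..y} gg" by (rule continuous_on_subset[OF gg_cont[of y]]) (use xy in auto)
  qed
qed

lemma gg_R_pos: "gg R > 0"
proof -
  have "integral {0..R} q \<le> integral {0..R} (\<lambda>_. R / ph R)"
  proof (intro integral_le q_int)
    fix u assume u: "u \<in> {0..R}"
    have "Ph u \<le> R" using Ph_le[of u] u by auto
    moreover have "ph R \<le> ph u" using ph_anti[of u R] u by auto
    ultimately show "q u \<le> R / ph R" unfolding q_def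
      using Ph_nn[of u] u ph_pos[of u] ph_pos[of R]
      by (intro frac_le) auto
  qed auto
  also have "\<dots> = R^2 / ph R" using R_pos by (simp add: power2_eq_square)
  finally have "C/4 * integral {0..R} q \<le> C/4 * (R^2 / ph R)"
    using C_nn by (intro mult_left_mono) auto
  also have "\<dots> < 1" using small ph_pos[of R] by (simp add: field_simps)
  finally show ?thesis unfolding gg_alt by simp
qed

lemma gg_pos: "0 \<le> s \<Longrightarrow> s \<le> R \<Longrightarrow> gg s > 0"
  using gg_anti[of s R] gg_R_pos by auto


definition psi where "psi u = ph u * gg u"
definition cl :: "real \<Rightarrow> real" where "cl u = max 0 (min u R)"
definition K where "K t = integral {-1..t} (\<lambda>u. psi (cl u))"
definition f2 where "f2 x = ph x * (- (1/4) * k * x) * gg x + ph x * (- (C/4) * q x)"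

lemma psi_cont: "continuous_on {0..b} psi"
  unfolding psi_def[abs_def] by (intro continuous_intros ph_cont gg_cont)

lemma psi_deriv: "0 < x \<Longrightarrow> (psi has_real_derivative f2 x) (at x)"
  unfolding psi_def[abs_def] f2_def
  by (rule derivative_eq_intros ph_deriv gg_deriv | simp)+

lemma psi_nn: "0 \<le> s \<Longrightarrow> s \<le> R \<Longrightarrow> 0 \<le> psi s"
  unfolding psi_def using ph_pos[of s] gg_pos[of s] by simp

lemma psi_le1: "0 \<le> s \<Longrightarrow> s \<le> R \<Longrightarrow> psi s \<le> 1"
  unfolding psi_def using ph_pos[of s] gg_pos[of s] ph_le1[of s] gg_le1[of s]
  by (simp add: mult_le_one)

lemma f2_nonpos: "0 < x \<Longrightarrow> x \<le> R \<Longrightarrow> f2 x \<le> 0"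
proof -
  assume x: "0 < x" "x \<le> R"
  have "ph x * q x = Ph x" unfolding q_def using ph_pos[of x] by simp
  then have "f2 x = - (ph x * (1/4) * k * x * gg x) - C/4 * Ph x"
    unfolding f2_def by (simp add: algebra_simps)
  moreover have "0 \<le> ph x * (1/4) * k * x * gg x"
    using ph_pos[of x] k_nn x gg_pos[of x] by simp
  moreover have "0 \<le> C/4 * Ph x" using C_nn Ph_nn[of x] x by simp
  ultimately show ?thesis by linarith
qed

lemma psi_anti: "0 \<le> x \<Longrightarrow> x \<le> y \<Longrightarrow> y \<le> R \<Longrightarrow> psi y \<le> psi x"
proof -
  assume xy: "0 \<le> x" "x \<le> y" "y \<le> R"
  show ?thesis
  proof (rule DERIV_nonpos_imp_decreasing_open[OF xy(2)])
    fix z assume "x < z" "z < y"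
    then show "\<exists>c. (psi has_real_derivative c) (at z) \<and> c \<le> 0"
      using xy psi_deriv[of z] f2_nonpos[of z] by (intro exI[of _ "f2 z"]) auto
  next
    show "continuous_on {x..y} psi" by (rule continuous_on_subset[OF psi_cont[of y]]) (use xy in auto)
  qed
qed

lemma cl_range: "0 \<le> cl u" "cl u \<le> R"
  unfolding cl_def using R_pos by auto

lemma cl_mono: "x \<le> y \<Longrightarrow> cl x \<le> cl y"
  unfolding cl_def by auto

lemma psic_cont: "continuous_on S (\<lambda>u. psi (cl u))"
proof -
  have "continuous_on S cl" unfolding cl_def[abs_def] by (intro continuous_intros)
  moreover have "continuous_on (cl ` S) psi"
    by (rule continuous_on_subset[OF psi_cont[of R]]) (use cl_range in auto)
  ultimately show ?thesis using continuous_on_compose[of S cl psi] by (simp add: o_def)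
qed

lemma psic_int: "(\<lambda>u. psi (cl u)) integrable_on {a..b}"
  by (intro integrable_continuous_interval psic_cont)

lemma K_deriv: "-1 < x \<Longrightarrow> (K has_real_derivative psi (cl x)) (at x)"
  unfolding K_def[abs_def] by (rule deriv_int[where b="x+1"]) (auto intro: psic_cont)

lemma K_cont: "continuous_on {a..b} K" if "-1 < a"
  by (intro continuous_at_imp_continuous_on ballI DERIV_isCont[OF K_deriv]) (use that in auto)

lemma K_mono: "-1 < x \<Longrightarrow> x \<le> y \<Longrightarrow> K x \<le> K y"
proof -
  assume xy: "-1 < x" "x \<le> y"
  show ?thesis
  proof (rule DERIV_nonneg_imp_increasing_open[OF xy(2)])
    fix z assume "x < z" "z < y"
    then show "\<exists>c. (K has_real_derivative c) (at z) \<and> c \<ge> 0"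
      using xy K_deriv[of z] psi_nn[OF cl_range] by (intro exI[of _ "psi (cl z)"]) auto
  qed (rule K_cont, use xy in auto)
qed

lemma K_concave: "concave_on {0..} K"
proof -
  have "convex_on {-1<..} (\<lambda>x. - K x)"
  proof (rule convex_on_realI[where f'="\<lambda>x. - psi (cl x)"])
    show "connected {(-1::real)<..}" by simp
    fix x :: real assume "x \<in> {-1<..}"
    then show "((\<lambda>x. - K x) has_real_derivative - psi (cl x)) (at x)"
      using K_deriv by (auto intro!: derivative_eq_intros)
  next
    fix x y :: real assume "x \<le> y"
    then show "- psi (cl x) \<le> - psi (cl y)"
      using psi_anti[OF cl_range(1) cl_mono cl_range(2)] by auto
  qed
  then have "convex_on {0..} (\<lambda>x. - K x)" by (rule convex_on_subset) auto
  then show ?thesis unfolding concave_on_def .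
qed

lemma ff_eq: "0 \<le> s \<Longrightarrow> ff s = K (min s R) - K 0"
proof -
  assume s: "0 \<le> s"
  define t where "t = min s R"
  have t: "0 \<le> t" "t \<le> R" using s R_pos unfolding t_def by auto
  have "K t = integral {-1..0} (\<lambda>u. psi (cl u)) + integral {0..t} (\<lambda>u. psi (cl u))"
    unfolding K_def using t Henstock_Kurzweil_Integration.integral_combine[where a="-1" and c=0 and b=t and f="\<lambda>u. psi (cl u)"] psic_int by auto
  moreover have "integral {0..t} (\<lambda>u. psi (cl u)) = integral {0..t} psi"
    by (intro integral_cong) (use t in \<open>auto simp: cl_def\<close>)
  moreover have "K 0 = integral {-1..0} (\<lambda>u. psi (cl u))" unfolding K_def ..
  ultimately show ?thesis unfolding ff_def t_def psi_def[abs_def] by simp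
qed

lemma K_lower: "0 \<le> t \<Longrightarrow> t \<le> R \<Longrightarrow> K t - K 0 \<ge> psi R * t"
proof -
  assume t: "0 \<le> t" "t \<le> R"
  have "(\<lambda>t. K t - psi R * t) 0 \<le> (\<lambda>t. K t - psi R * t) t"
  proof (rule DERIV_nonneg_imp_increasing_open[OF t(1)])
    fix z assume z: "0 < z" "z < t"
    have "cl z = z" using t z by (auto simp: cl_def)
    then have "psi R \<le> psi (cl z)" using psi_anti[of z R] t z by auto
    then show "\<exists>c. ((\<lambda>t. K t - psi R * t) has_real_derivative c) (at z) \<and> c \<ge> 0"
      using z by (intro exI[of _ "psi (cl z) - psi R"]) (auto intro!: derivative_eq_intros K_deriv)
  next
    show "continuous_on {0..t} (\<lambda>t. K t - psi R * t)"
      by (intro continuous_intros K_cont) auto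
  qed
  then show ?thesis by simp
qed

lemma K_upper: "0 \<le> t \<Longrightarrow> K t - K 0 \<le> t"
proof -
  assume t: "0 \<le> t"
  have "(\<lambda>t. t - K t) 0 \<le> (\<lambda>t. t - K t) t"
  proof (rule DERIV_nonneg_imp_increasing_open[OF t(1)])
    fix z assume z: "0 < z" "z < t"
    have "psi (cl z) \<le> 1" using psi_le1[OF cl_range] .
    then show "\<exists>c. ((\<lambda>t. t - K t) has_real_derivative c) (at z) \<and> c \<ge> 0"
      using z by (intro exI[of _ "1 - psi (cl z)"]) (auto intro!: derivative_eq_intros K_deriv)
  next
    show "continuous_on {0..t} (\<lambda>t. t - K t)"
      by (intro continuous_intros K_cont) auto
  qed
  then show ?thesis by simp
qed


lemma ff_K: "0 \<le> s \<Longrightarrow> s \<le> R \<Longrightarrow> ff s = K s - K 0"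
  using ff_eq[of s] by simp

lemma psi_R_pos: "psi R > 0"
  unfolding psi_def using ph_pos[of R] gg_R_pos by simp

lemma main:
  shows "(\<exists>f' f''. (\<forall>x\<in>{0<..<R}. (ff has_real_derivative f' x) (at x)
                                   \<and> (f' has_real_derivative f'' x) (at x))
                 \<and> continuous_on {0<..<R} f'')
       \<and> (ff has_real_derivative 1) (at_right 0)
       \<and> (\<exists>D > 0. (ff has_real_derivative D) (at_left R)
            \<and> (\<forall>s\<ge>0. min s R * D \<le> ff s \<and> ff s \<le> min s (ff R) \<and> min s (ff R) \<le> min s R))
       \<and> (\<forall>s\<ge>R. ff s = ff R)
       \<and> (\<forall>s\<ge>0. ff s \<ge> 0)
       \<and> mono_on {0..} ff
       \<and> concave_on {0..} ff"
proof (intro conjI)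
  have Kd: "((\<lambda>s. K s - K 0) has_real_derivative psi (cl x)) (at x)" if "-1 < x" for x
    using K_deriv[OF that] by (auto intro!: derivative_eq_intros)
  show "\<exists>f' f''. (\<forall>x\<in>{0<..<R}. (ff has_real_derivative f' x) (at x)
                                   \<and> (f' has_real_derivative f'' x) (at x))
                 \<and> continuous_on {0<..<R} f''"
  proof (rule exI[of _ psi], rule exI[of _ f2], intro conjI ballI)
    fix x assume x: "x \<in> {0<..<R}"
    have "cl x = x" using x by (auto simp: cl_def)
    then have kd: "((\<lambda>s. K s - K 0) has_real_derivative psi x) (at x)"
      using x Kd[of x] by simp
    have eq: "\<And>z. z \<in> {0<..<R} \<Longrightarrow> K z - K 0 = ff z" using ff_K by simp
    show "(ff has_real_derivative psi x) (at x)"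
      by (rule has_field_derivative_transform_within_open[OF kd _ x eq]) simp
    show "(psi has_real_derivative f2 x) (at x)" using psi_deriv x by auto
  next
    show "continuous_on {0<..<R} f2"
    proof (intro continuous_at_imp_continuous_on ballI)
      fix x assume x: "x \<in> {0<..<R}"
      have "isCont ph x" using DERIV_isCont[OF ph_deriv] .
      moreover have "isCont gg x" using DERIV_isCont[OF gg_deriv] x by auto
      moreover have "isCont Ph x" using DERIV_isCont[OF Ph_deriv] x by auto
      ultimately show "isCont f2 x" unfolding f2_def[abs_def] q_def[abs_def]
        using ph_pos[of x] by (intro continuous_intros) auto
    qed
  qed
  have R0: "0 < R" by (rule R_pos)
  have d0: "((\<lambda>s. K s - K 0) has_real_derivative 1) (at 0 within {0..R})"
    using Kd[of 0] by (simp add: cl_def psi_def ph_0 gg_0 has_field_derivative_at_within)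
  have "(ff has_real_derivative 1) (at 0 within {0..R})"
    by (rule has_field_derivative_transform_within[OF d0, where d=1]) (use R0 ff_K in auto)
  then show "(ff has_real_derivative 1) (at_right 0)"
    by (simp add: at_within_Icc_at_right[OF R0])
  show "\<exists>D > 0. (ff has_real_derivative D) (at_left R)
            \<and> (\<forall>s\<ge>0. min s R * D \<le> ff s \<and> ff s \<le> min s (ff R) \<and> min s (ff R) \<le> min s R)"
  proof (intro exI conjI allI impI)
    show "psi R > 0" by (rule psi_R_pos)
    have dR: "((\<lambda>s. K s - K 0) has_real_derivative psi R) (at R within {0..R})"
      using Kd[of R] R0 by (simp add: cl_def has_field_derivative_at_within)
    have "(ff has_real_derivative psi R) (at R within {0..R})"
      by (rule has_field_derivative_transform_within[OF dR, where d=1]) (use R0 ff_K in auto)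
    then show "(ff has_real_derivative psi R) (at_left R)"
      by (simp add: at_within_Icc_at_left[OF R0])
  next
    fix s :: real assume s: "0 \<le> s"
    have t: "0 \<le> min s R" "min s R \<le> R" using s R0 by auto
    have fs: "ff s = K (min s R) - K 0" using ff_eq[OF s] .
    have fR: "ff R = K R - K 0" using ff_K[of R] R0 by simp
    show "min s R * psi R \<le> ff s" using K_lower[OF t] fs by (simp add: mult.commute)
    have "ff s \<le> min s R" using K_upper[OF t(1)] fs by simp
    moreover have "ff s \<le> ff R" using fs fR K_mono[of "min s R" R] t by simp
    ultimately show "ff s \<le> min s (ff R)" by simp
    have "ff R \<le> R" using K_upper[of R] fR R0 by simp
    then show "min s (ff R) \<le> min s R" by simp
  qed
  show "\<forall>s\<ge>R. ff s = ff R" unfolding ff_def by simp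
  show "\<forall>s\<ge>0. ff s \<ge> 0"
  proof (intro allI impI)
    fix s :: real assume s: "0 \<le> s"
    have t: "0 \<le> min s R" "min s R \<le> R" using s R_pos by auto
    show "ff s \<ge> 0" using K_lower[OF t] ff_eq[OF s] psi_R_pos t(1)
      by (smt (verit) mult_nonneg_nonneg)
  qed
  show "mono_on {0..} ff"
  proof (rule mono_onI)
    fix s t :: real assume "s \<in> {0..}" "t \<in> {0..}" "s \<le> t"
    then show "ff s \<le> ff t" using ff_eq[of s] ff_eq[of t] K_mono[of "min s R" "min t R"] R_pos
      by auto
  qed
  show "concave_on {0..} ff"
    unfolding concave_on_iff
  proof (intro conjI ballI allI impI)
    show "convex {0::real..}" by simp
    fix x y u v :: real assume xy: "x \<in> {0..}" "y \<in> {0..}" and uv: "0 \<le> u" "0 \<le> v" "u + v = 1"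
    have hx: "min x R \<in> {0..}" "min y R \<in> {0..}" using xy R_pos by auto
    have p: "0 \<le> u *\<^sub>R x + v *\<^sub>R y" using xy uv by simp
    have le: "u * min x R + v * min y R \<le> min (u * x + v * y) R"
    proof -
      have "u * min x R + v * min y R \<le> u * x + v * y"
        using uv by (intro add_mono mult_left_mono) auto
      moreover have "u * min x R + v * min y R \<le> u * R + v * R"
        using uv by (intro add_mono mult_left_mono) auto
      ultimately show ?thesis using uv by (simp add: distrib_right[symmetric])
    qed
    have u1: "u = 1 - v" using uv by simp
    have "u * ff x + v * ff y = u * K (min x R) + v * K (min y R) - (u + v) * K 0"
      using ff_eq[of x] ff_eq[of y] xy by (simp add: right_diff_distrib distrib_right)
    also have "\<dots> = u * K (min x R) + v * K (min y R) - K 0" using uv by simp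
    also have "\<dots> \<le> K (u * min x R + v * min y R) - K 0"
      using concave_onD[OF K_concave, of v "min x R" "min y R"] hx uv unfolding u1 by simp
    also have "\<dots> \<le> K (min (u * x + v * y) R) - K 0"
    proof -
      have "0 \<le> u * min x R + v * min y R" using hx uv by simp
      then show ?thesis using K_mono[OF _ le] by simp
    qed
    also have "\<dots> = ff (u *\<^sub>R x + v *\<^sub>R y)" using ff_eq[OF p] by simp
    finally show "ff (u *\<^sub>R x + v *\<^sub>R y) \<ge> u * ff x + v * ff y" .
  qed
qed

end

theorem lemma2p5:
  fixes U W :: "'a::euclidean_space \<Rightarrow> real"
    and GU GW :: "'a \<Rightarrow> 'a"
    and lam A At LU LW :: real
  assumes U_grad: "\<And>x. (U has_derivative (\<lambda>h. GU x \<bullet> h)) (at x)"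
    and U_C1: "continuous_on UNIV GU"
    and W_grad: "\<And>x. (W has_derivative (\<lambda>h. GW x \<bullet> h)) (at x)"
    and W_C1: "continuous_on UNIV GW"
    and A1_nonneg: "\<And>x. U x \<ge> 0"
    and A1_lam: "lam > 0" and A1_A: "A \<ge> 0"
    and A1: "\<And>x. (1/2) * (GU x \<bullet> x) \<ge> lam * (U x + (norm x)^2 / 4) - A"
    and A2_pos: "LU > 0"
    and A2: "\<And>x y. norm (GU x - GU y) \<le> LU * norm (x - y)"
    and A3_even: "\<And>x. W (- x) = W x"
    and A3_lip: "\<And>x y. norm (GW x - GW y) \<le> LW * norm (x - y)"
    and A3_small: "LW < lam / 8"
    and At_nonneg: "At \<ge> 0"
    and At_bound: "\<And>x. U x \<ge> lam / 6 * (norm x)^2 - At"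
  defines "f \<equiv> ffun lam A At LU LW DIM('a)"
    and "r \<equiv> R1 lam A At LU DIM('a)"
  shows "(\<exists>f' f''. (\<forall>x\<in>{0<..<r}. (f has_real_derivative f' x) (at x)
                                   \<and> (f' has_real_derivative f'' x) (at x))
                 \<and> continuous_on {0<..<r} f'')
       \<and> (f has_real_derivative 1) (at_right 0)
       \<and> (\<exists>D > 0. (f has_real_derivative D) (at_left r)
            \<and> (\<forall>s\<ge>0. min s r * D \<le> f s \<and> f s \<le> min s (f r) \<and> min s (f r) \<le> min s r))
       \<and> (\<forall>s\<ge>r. f s = f r)
       \<and> (\<forall>s\<ge>0. f s \<ge> 0)
       \<and> mono_on {0..} f
       \<and> concave_on {0..} f"
  proof -
  define d where "d = DIM('a)"
  define al where "al = alph lam LU"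
  define M where "M = max (1 / (2 * al)) 1"
  define B where "B = Bc lam A At d"
  define c where "c = cc lam A At LU LW d"
  define ep where "ep = eps lam A At LU LW d"
  define C where "C = CC lam A At LU LW d"
  define R where "R = R1 lam A At LU d"
  define k where "k = (LU + LW) / al + al + 96 * ep * M"
  define k0 where "k0 = kappa0 lam LU LW"
  define m where "m = min (1/2 - (LU + LW) / (2 * al)) (2 * sqrt ((LU + LW) / (2 * pi * al)))"
  define E0 where "E0 = exp (- (1/8) * k0 * R^2)"
  have LW0: "LW \<ge> 0"
  proof -
    obtain b :: 'a where b: "b \<in> Basis" using nonempty_Basis by blast
    have "0 \<le> norm (GW b - GW 0)" by simp
    also have "\<dots> \<le> LW * norm (b - 0)" by (rule A3_lip)
    finally show ?thesis using b by simp
  qed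
  have al_pos: "al > 0" unfolding al_def alph_def using A2_pos A1_lam by simp
  have M1: "M \<ge> 1" unfolding M_def by simp
  have d1: "real d \<ge> 1" unfolding d_def using DIM_positive[where 'a='a] by linarith
  have g0: "0 < gam lam" unfolding gam_def using A1_lam by simp
  have gl: "gam lam < lam" unfolding gam_def using A1_lam by (simp add: field_simps add_pos_pos)
  have "(lam - gam lam) * At \<ge> 0" using gl At_nonneg by simp
  then have B24: "B \<ge> 24" unfolding B_def Bc_def using A1_A d1 by simp
  have a0: "0 \<le> (LU + LW) / (2 * al)" using al_pos A2_pos LW0 by simp
  have a1: "(LU + LW) / (2 * al) \<le> 1/2"
    using al_pos A3_small A1_lam unfolding al_def alph_def by (simp add: field_simps)
  have m0: "0 \<le> m" unfolding m_def using a1 al_pos A2_pos LW0 by simp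
  have m1: "m \<le> 1/2"
  proof -
    have "m \<le> 1/2 - (LU + LW) / (2 * al)" unfolding m_def by (rule min.cobounded1)
    then show ?thesis using a0 by linarith
  qed
  have k00: "k0 \<ge> 0" unfolding k0_def kappa0_def al_def[symmetric] M_def[symmetric]
    using al_pos A2_pos LW0 M1 by simp
  have E0p: "0 < E0" "E0 \<le> 1" unfolding E0_def using k00 by auto
  have c_eq: "c = min (gam lam / 36) (min (B / 3) (1/7 * m * E0))"
    unfolding c_def cc_def B_def m_def E0_def al_def R_def k0_def d_def by simp
  have c0: "0 \<le> c" unfolding c_eq using g0 B24 m0 E0p by simp
  have c1: "c \<le> 1/7 * m * E0" unfolding c_eq by simp
  have c2: "c \<le> 1/14"
  proof -
    have "m * E0 \<le> 1/2 * 1" using m1 E0p m0 by (intro mult_mono) auto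
    then show ?thesis using c1 by simp
  qed
  have ep_eq: "ep = 3 * c / B" unfolding ep_def eps_def c_def B_def ..
  have ep0: "0 \<le> ep" unfolding ep_eq using c0 B24 by simp
  have ep1: "ep \<le> 1/2" unfolding ep_eq using c2 B24 by (simp add: field_simps)
  have C_eq: "C = 7 * c" unfolding C_def CC_def c_def[symmetric] ep_def[symmetric] B_def[symmetric]
    using ep_eq B24 by simp
  have C0: "0 \<le> C" using C_eq c0 by simp
  have k_nn: "0 \<le> k" unfolding k_def using al_pos A2_pos LW0 ep0 M1 by simp
  have kk: "k0 - k = 96 * M * (1 - ep)"
    unfolding k0_def kappa0_def k_def al_def[symmetric] M_def[symmetric] by (simp add: algebra_simps)
  have kk48: "k0 - k \<ge> 48"
  proof -
    have "96 * 1 * (1/2) \<le> 96 * M * (1 - ep)" using M1 ep1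
      by (intro mult_mono) auto
    then show ?thesis using kk by simp
  qed
  have R_pos: "R > 0" unfolding R_def R1_def alph_def[symmetric] al_def[symmetric]
    using B24 g0 A1_lam al_pos unfolding B_def d_def
    by (intro real_sqrt_gt_zero divide_pos_pos mult_pos_pos add_pos_pos) auto
  define y where "y = (1/8) * (k0 - k) * R^2"
  define X where "X = exp (- y)"
  have y6: "y \<ge> 6 * R^2" unfolding y_def using kk48 by (simp add: mult_right_mono)
  have E0X: "E0 = exp (- (1/8) * k * R^2) * X"
  proof -
    have "- (1/8) * k0 * R^2 = - (1/8) * k * R^2 + - y" unfolding y_def by (simp add: field_simps)
    then show ?thesis unfolding E0_def X_def by (simp add: exp_add[symmetric] exp_diff)
  qed
  have X1: "X * (1 + y) \<le> 1"
  proof -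
    have "X * (1 + y) \<le> X * exp y" unfolding X_def by (intro mult_left_mono exp_ge_add_one_self) auto
    also have "\<dots> = 1" unfolding X_def by (simp add: exp_minus field_simps)
    finally show ?thesis .
  qed
  have RX: "R^2 * X < 1"
  proof -
    have "0 < X" unfolding X_def by simp
    have "R^2 < 1 + y" using y6 R_pos by (smt (verit) zero_le_power2)
    then have "R^2 * X < (1 + y) * X" using \<open>0 < X\<close> by simp
    then show ?thesis using X1 by (simp add: mult.commute)
  qed
  have small: "C * R^2 < 4 * exp (- (1/8) * k * R^2)"
  proof -
    have "C \<le> m * E0" using C_eq c1 by simp
    also have "\<dots> \<le> 1/2 * E0" using m1 E0p by (intro mult_right_mono) auto
    finally have "C * R^2 \<le> 1/2 * E0 * R^2" by (intro mult_right_mono) auto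
    also have "\<dots> = 1/2 * exp (- (1/8) * k * R^2) * (R^2 * X)" unfolding E0X by simp
    also have "\<dots> \<le> 1/2 * exp (- (1/8) * k * R^2)"
      using RX mult_left_mono[of "R^2 * X" 1 "1/2 * exp (- (1/8) * k * R^2)"] by simp
    also have "\<dots> < 4 * exp (- (1/8) * k * R^2)" by simp
    finally show ?thesis .
  qed
  interpret fs: fsetup k C R "phi lam A At LU LW d" "Phi lam A At LU LW d"
      "gfun lam A At LU LW d" "ffun lam A At LU LW d"
  proof
    show "0 \<le> k" by (rule k_nn)
    show "0 \<le> C" by (rule C0)
    show "0 < R" by (rule R_pos)
    show ph: "\<And>s. phi lam A At LU LW d s = exp (- (1/8) * k * s^2)"
      unfolding phi_def k_def ep_def M_def al_def ..
    show "\<And>s. Phi lam A At LU LW d s = integral {0..s} (phi lam A At LU LW d)"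
      unfolding Phi_def ..
    show "\<And>s. gfun lam A At LU LW d s = 1 - C / 4 * integral {0..s}
          (\<lambda>u. Phi lam A At LU LW d u / phi lam A At LU LW d u)"
      unfolding gfun_def C_def ..
    show "\<And>s. ffun lam A At LU LW d s = integral {0..min s R}
          (\<lambda>u. phi lam A At LU LW d u * gfun lam A At LU LW d u)"
      unfolding ffun_def R_def ..
    show "C * R^2 < 4 * phi lam A At LU LW d R" unfolding ph by (rule small)
  qed
  show ?thesis using fs.main unfolding f_def r_def d_def R_def .
qed

end
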